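(* Let $\{x_i\}_{i\in[N]}$ be the global solution of the delayed consensus system described in the context, let $\beta>0$ satisfy $2\beta e^{-2\tau}-4\tau-\beta\ge0$, and let \[ F(t):=d_x(t)+\beta\int_{\max\{0,t-2\tau\}}^t e^{-(t-s)}\int_s^t\max_{i\in[N]}|\dot x_i(r)|\,\mathrm dr\,\mathrm ds,\qquad t\ge0. \] Then for almost all $t>2\tau$, \[ \frac{\mathrm d}{\mathrm dt}F(t)\le 4\int_{t-\tau}^tF(s-\tau)\,\mathrm ds-(N-1)\underline a(t)F(t)+\beta(1-e^{-2\tau})F(t-\tau), \] where $\underline a(t):=\min_{i,j\in[N]}a_{ij}(t)$.
   Context: Let $N\ge2$, $d\ge1$ be integers, $[N]=\{1,\dots,N\}$, $0\le\sigma\le\tau$. Let $\psi:[0,\infty)\to[0,\infty)$ be continuous, nonincreasing, positive everywhere, with $\sup\psi\le1$. Given $x_i^0\in C([-\tau,0],\mathbb{R}^d)$, $\{x_i\}$ is the global solution (continuous on $[-\tau,\infty)$, continuously differentiable on $[0,\infty)$) of $\dot x_i(t)=\sum_{j\ne i}a_{ij}(t)(x_j(t-\tau)-x_i(t-\sigma))$ for $t>0$, with $a_{ij}(t)=\frac1{N-1}\psi(|x_i(t-\sigma)-x_j(t-\tau)|)$ for all $i,j\in[N]$, and $x_i=x_i^0$ on $[-\tau,0]$. $d_x(t):=\max_{i,j\in[N]}|x_i(t)-x_j(t)|$. *)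

theory Defs
  imports "HOL-Analysis.Analysis"
begin

definition comm_weight ::
  "(real \<Rightarrow> real) \<Rightarrow> nat \<Rightarrow> real \<Rightarrow> real \<Rightarrow> (nat \<Rightarrow> real \<Rightarrow> 'a::real_normed_vector)
   \<Rightarrow> nat \<Rightarrow> nat \<Rightarrow> real \<Rightarrow> real" where
  "comm_weight \<psi> N \<sigma> \<tau> x i j t = \<psi> (norm (x i (t - \<sigma>) - x j (t - \<tau>))) / real (N - 1)"

definition min_weight ::
  "(real \<Rightarrow> real) \<Rightarrow> nat \<Rightarrow> real \<Rightarrow> real \<Rightarrow> (nat \<Rightarrow> real \<Rightarrow> 'a::real_normed_vector)
   \<Rightarrow> real \<Rightarrow> real" where
  "min_weight \<psi> N \<sigma> \<tau> x t =
     Min ((\<lambda>(i, j). comm_weight \<psi> N \<sigma> \<tau> x i j t) ` ({1..N} \<times> {1..N}))"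

definition diam_x :: "nat \<Rightarrow> (nat \<Rightarrow> real \<Rightarrow> 'a::real_normed_vector) \<Rightarrow> real \<Rightarrow> real" where
  "diam_x N x t = Max ((\<lambda>(i, j). norm (x i t - x j t)) ` ({1..N} \<times> {1..N}))"

text \<open>The Lyapunov-type functional F(t); x' i is the derivative of x i.\<close>
definition F_fun ::
  "real \<Rightarrow> real \<Rightarrow> nat \<Rightarrow> (nat \<Rightarrow> real \<Rightarrow> 'a::real_normed_vector) \<Rightarrow> (nat \<Rightarrow> real \<Rightarrow> 'a)
   \<Rightarrow> real \<Rightarrow> real" where
  "F_fun \<beta> \<tau> N x x' t = diam_x N x t +
     \<beta> * integral {max 0 (t - 2 * \<tau>)..t}
        (\<lambda>s. exp (- (t - s)) * integral {s..t} (\<lambda>r. Max ((\<lambda>i. norm (x' i r)) ` {1..N})))"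

end

theory Submission
  imports Defs
begin

lemma countable_isolated_real:
  fixes S :: "real set"
  assumes iso: "\<And>t. t \<in> S \<Longrightarrow> \<exists>e>0. \<forall>s\<in>S. \<bar>s - t\<bar> < e \<longrightarrow> s = t"
  shows "countable S"
proof -
  have "\<exists>q. fst q \<in> \<rat> \<and> snd q \<in> \<rat> \<and> fst q < t \<and> t < snd q \<and> (\<forall>s\<in>S. fst q < s \<and> s < snd q \<longrightarrow> s = t)"
    if tS: "t \<in> S" for t
  proof -
    obtain e where e: "e > 0" "\<forall>s\<in>S. \<bar>s - t\<bar> < e \<longrightarrow> s = t" using iso[OF tS] by blast
    obtain q1 where q1: "q1 \<in> \<rat>" "t - e < q1" "q1 < t" using Rats_dense_in_real[of "t - e" t] e by auto
    obtain q2 where q2: "q2 \<in> \<rat>" "t < q2" "q2 < t + e" using Rats_dense_in_real[of t "t + e"] e by auto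
    show ?thesis
      by (rule exI[of _ "(q1, q2)"]) (use q1 q2 e in auto)
  qed
  then obtain g where g: "\<And>t. t \<in> S \<Longrightarrow> fst (g t) \<in> \<rat> \<and> snd (g t) \<in> \<rat> \<and> fst (g t) < t \<and> t < snd (g t) \<and> (\<forall>s\<in>S. fst (g t) < s \<and> s < snd (g t) \<longrightarrow> s = t)"
    by metis
  have inj: "inj_on g S"
  proof (rule inj_onI)
    fix a b assume "a \<in> S" "b \<in> S" "g a = g b"
    then show "a = b" using g[of a] g[of b] by metis
  qed
  have "g ` S \<subseteq> \<rat> \<times> \<rat>"
  proof
    fix z assume "z \<in> g ` S"
    then obtain t where "t \<in> S" "z = g t" by blast
    then show "z \<in> \<rat> \<times> \<rat>" using g[of t] by (simp add: mem_Times_iff)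
  qed
  moreover have "countable (\<rat> \<times> (\<rat> :: real set))" by (intro countable_SIGMA countable_rat)
  ultimately have "countable (g ` S)" by (rule countable_subset)
  then show ?thesis using inj by (rule countable_image_inj_on)
qed

lemma countable_zero_nonzero_deriv:
  fixes h :: "real \<Rightarrow> 'b::real_normed_vector"
  shows "countable {t. h t = 0 \<and> (\<exists>v. v \<noteq> 0 \<and> (h has_vector_derivative v) (at t))}"
proof (rule countable_isolated_real)
  fix t assume "t \<in> {t. h t = 0 \<and> (\<exists>v. v \<noteq> 0 \<and> (h has_vector_derivative v) (at t))}"
  then obtain v where t: "h t = 0" "v \<noteq> 0" "(h has_vector_derivative v) (at t)" by blast
  have "\<exists>d>0. \<forall>y. norm (y - t) < d \<longrightarrow> norm (h y - h t - (y - t) *\<^sub>R v) \<le> (norm v / 2) * norm (y - t)"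
  proof -
    have "\<forall>e>0. \<exists>d>0. \<forall>y. norm (y - t) < d \<longrightarrow> norm (h y - h t - (y - t) *\<^sub>R v) \<le> e * norm (y - t)"
      using t(3) unfolding has_vector_derivative_def has_derivative_at_alt by blast
    moreover have "norm v / 2 > 0" using t(2) by simp
    ultimately show ?thesis by blast
  qed
  then obtain e where e: "e > 0" "\<forall>y. norm (y - t) < e \<longrightarrow> norm (h y - h t - (y - t) *\<^sub>R v) \<le> (norm v / 2) * norm (y - t)"
    by blast
  have "s = t" if "h s = 0" "\<bar>s - t\<bar> < e" for s
  proof (rule ccontr)
    assume "s \<noteq> t"
    have "norm ((s - t) *\<^sub>R v) \<le> (norm v / 2) * norm (s - t)"
      using e(2)[rule_format, of s] that t(1) by simp
    then have "\<bar>s - t\<bar> * norm v \<le> (norm v / 2) * \<bar>s - t\<bar>" by simp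
    moreover have "\<bar>s - t\<bar> > 0" "norm v > 0" using \<open>s \<noteq> t\<close> t(2) by auto
    moreover have "(norm v / 2) * \<bar>s - t\<bar> = (\<bar>s - t\<bar> * norm v) / 2" by simp
    moreover have "0 < \<bar>s - t\<bar> * norm v" using \<open>\<bar>s - t\<bar> > 0\<close> \<open>norm v > 0\<close> by simp
    ultimately show False by linarith
  qed
  show "\<exists>e>0. \<forall>s\<in>{t. h t = 0 \<and> (\<exists>v. v \<noteq> 0 \<and> (h has_vector_derivative v) (at t))}. \<bar>s - t\<bar> < e \<longrightarrow> s = t"
  proof (intro exI[of _ e] conjI ballI impI)
    show "e > 0" by (rule e(1))
  next
    fix s assume "s \<in> {t. h t = 0 \<and> (\<exists>v. v \<noteq> 0 \<and> (h has_vector_derivative v) (at t))}" "\<bar>s - t\<bar> < e"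
    then show "s = t" using \<open>\<And>s. h s = 0 \<Longrightarrow> \<bar>s - t\<bar> < e \<Longrightarrow> s = t\<close> by simp
  qed
qed

lemma continuous_on_Max_fam:
  fixes f :: "'k \<Rightarrow> real \<Rightarrow> real"
  assumes "finite I" "I \<noteq> {}" "\<And>k. k \<in> I \<Longrightarrow> continuous_on S (f k)"
  shows "continuous_on S (\<lambda>s. Max ((\<lambda>k. f k s) ` I))"
  using assms
proof (induction I rule: finite_ne_induct)
  case (singleton x)
  then show ?case by simp
next
  case (insert x F)
  have "(\<lambda>s. Max ((\<lambda>k. f k s) ` insert x F)) = (\<lambda>s. max (f x s) (Max ((\<lambda>k. f k s) ` F)))"
    using insert.hyps by (auto simp: Max_insert)
  then show ?case using insert by (auto intro!: continuous_on_max)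
qed

lemma has_derivative_Max_fam:
  fixes f :: "'k \<Rightarrow> real \<Rightarrow> real"
  assumes fin: "finite I" and k0: "k0 \<in> I"
    and cont: "\<And>k. k \<in> I \<Longrightarrow> isCont (f k) t"
    and act0: "f k0 t = Max ((\<lambda>k. f k t) ` I)"
    and der: "\<And>k. k \<in> I \<Longrightarrow> f k t = Max ((\<lambda>k. f k t) ` I) \<Longrightarrow> (f k has_real_derivative D) (at t)"
  shows "((\<lambda>s. Max ((\<lambda>k. f k s) ` I)) has_real_derivative D) (at t)"
proof -
  define g where "g = (\<lambda>s. Max ((\<lambda>k. f k s) ` I))"
  define A where "A = {k\<in>I. f k t = g t}"
  have finA: "finite A" using fin by (simp add: A_def)
  have ge: "f k s \<le> g s" if "k \<in> I" for k s
    unfolding g_def using fin that by (auto intro: Max_ge)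
  have "\<forall>\<^sub>F s in at t. \<forall>k\<in>I - A. f k s < f k0 s"
  proof (intro eventually_ball_finite ballI)
    show "finite (I - A)" using fin by simp
  next
    fix k assume k: "k \<in> I - A"
    then have "f k t < f k0 t" using ge[of k t] act0 by (auto simp: A_def g_def)
    moreover have "((\<lambda>s. f k0 s - f k s) \<longlongrightarrow> f k0 t - f k t) (at t)"
      using cont[of k0] cont[of k] k k0 by (intro tendsto_diff) (auto simp: isCont_def)
    ultimately have "\<forall>\<^sub>F s in at t. f k0 s - f k s > 0"
      by (intro order_tendstoD(1)) auto
    then show "\<forall>\<^sub>F s in at t. f k s < f k0 s" by eventually_elim simp
  qed
  then have ev: "\<forall>\<^sub>F s in at t. \<exists>k\<in>A. g s = f k s"
  proof eventually_elim
    case (elim s)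
    have "g s \<in> (\<lambda>k. f k s) ` I" unfolding g_def using fin k0 by (intro Max_in) auto
    then obtain k where k: "k \<in> I" "g s = f k s" by blast
    have "k \<in> A"
    proof (rule ccontr)
      assume "k \<notin> A"
      then have "f k s < f k0 s" using elim k by blast
      then show False using ge[OF k0, of s] k by simp
    qed
    then show ?case using k by blast
  qed
  have Q: "((\<lambda>s. (f k s - f k t) / (s - t) - D) \<longlongrightarrow> 0) (at t)" if "k \<in> A" for k
  proof -
    have "(f k has_real_derivative D) (at t)" using der that by (auto simp: A_def g_def)
    then show ?thesis by (simp add: has_field_derivative_iff LIM_zero)
  qed
  have S: "((\<lambda>s. \<Sum>k\<in>A. \<bar>(f k s - f k t) / (s - t) - D\<bar>) \<longlongrightarrow> 0) (at t)"
    by (intro tendsto_null_sum tendsto_rabs_zero Q)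
  have "\<forall>\<^sub>F s in at t. norm ((g s - g t) / (s - t) - D) \<le> (\<Sum>k\<in>A. \<bar>(f k s - f k t) / (s - t) - D\<bar>)"
    using ev
  proof eventually_elim
    case (elim s)
    then obtain k where k: "k \<in> A" "g s = f k s" by blast
    then have "g t = f k t" by (simp add: A_def)
    then have "norm ((g s - g t) / (s - t) - D) = \<bar>(f k s - f k t) / (s - t) - D\<bar>" using k by simp
    also have "\<dots> \<le> (\<Sum>k\<in>A. \<bar>(f k s - f k t) / (s - t) - D\<bar>)"
      using finA k(1) by (intro member_le_sum) auto
    finally show ?case .
  qed
  then have "((\<lambda>s. (g s - g t) / (s - t) - D) \<longlongrightarrow> 0) (at t)"
    using S by (rule Lim_null_comparison)
  then have "((\<lambda>s. (g s - g t) / (s - t)) \<longlongrightarrow> D) (at t)" by (rule LIM_zero_cancel)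
  then show ?thesis unfolding g_def[symmetric] by (simp add: has_field_derivative_iff)
qed

lemma deriv_integral_at:
  fixes g :: "real \<Rightarrow> real"
  assumes "continuous_on {0..} g" "t > 0"
  shows "((\<lambda>u. integral {0..u} g) has_real_derivative g t) (at t)"
proof -
  have "continuous_on {0..t+1} g" using assms(1) by (rule continuous_on_subset) auto
  then have "((\<lambda>u. integral {0..u} g) has_real_derivative g t) (at t within {0..t+1})"
    by (rule integral_has_real_derivative) (use assms(2) in auto)
  then have "((\<lambda>u. integral {0..u} g) has_real_derivative g t) (at t within {0<..<t+1})"
    by (rule DERIV_subset) auto
  moreover have "at t within {0<..<t+1} = at t" by (rule at_within_open) (use assms(2) in auto)
  ultimately show ?thesis by simp
qed

lemma integral_nonneg_any:
  fixes f :: "real \<Rightarrow> real"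
  assumes "\<And>s. s \<in> S \<Longrightarrow> 0 \<le> f s"
  shows "0 \<le> integral S f"
proof (cases "f integrable_on S")
  case True then show ?thesis using assms by (rule integral_nonneg)
next
  case False then show ?thesis by (simp add: not_integrable_integral)
qed

locale cs =
  fixes N :: nat and \<sigma> \<tau> \<beta> :: real and \<psi> :: "real \<Rightarrow> real"
    and x x' :: "nat \<Rightarrow> real \<Rightarrow> 'a::euclidean_space"
  assumes N2: "N \<ge> 2"
    and sig: "0 \<le> \<sigma>" "\<sigma> \<le> \<tau>"
    and psi_cont: "continuous_on {0..} \<psi>"
    and psi_mono: "\<forall>s t. 0 \<le> s \<and> s \<le> t \<longrightarrow> \<psi> t \<le> \<psi> s"
    and psi_pos: "\<forall>r\<ge>0. 0 < \<psi> r"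
    and psi_le1: "\<forall>r\<ge>0. \<psi> r \<le> 1"
    and x_cont: "\<forall>i\<in>{1..N}. continuous_on {-\<tau>..} (x i)"
    and x_deriv: "\<forall>i\<in>{1..N}. \<forall>t\<ge>0. (x i has_vector_derivative x' i t) (at t within {0..})"
    and x'_cont: "\<forall>i\<in>{1..N}. continuous_on {0..} (x' i)"
    and ode: "\<forall>i\<in>{1..N}. \<forall>t>0.
               x' i t = (\<Sum>j\<in>{1..N} - {i}. comm_weight \<psi> N \<sigma> \<tau> x i j t *\<^sub>R (x j (t - \<tau>) - x i (t - \<sigma>)))"
    and beta: "\<beta> > 0" "2 * \<beta> * exp (- 2 * \<tau>) - 4 * \<tau> - \<beta> \<ge> 0"
begin

definition m where "m r = Max ((\<lambda>i. norm (x' i r)) ` {1..N})"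
definition M where "M t = integral {0..t} m"

lemma tau_nonneg: "\<tau> \<ge> 0" using sig by linarith

lemma Nne: "{1..N} \<noteq> {}" "finite {1..N}" using N2 by auto

lemma m_cont: "continuous_on {0..} m"
proof -
  have "continuous_on {0..} (\<lambda>r. Max ((\<lambda>i. norm (x' i r)) ` {1..N}))"
    using Nne x'_cont by (intro continuous_on_Max_fam continuous_on_norm) auto
  then show ?thesis by (simp add: m_def[abs_def])
qed

lemma m_ge: "i \<in> {1..N} \<Longrightarrow> norm (x' i r) \<le> m r"
  unfolding m_def using Nne by (intro Max_ge) auto

lemma m_nonneg: "0 \<le> m r"
proof -
  have "(1::nat) \<in> {1..N}" using N2 by simp
  then show ?thesis using m_ge[of 1 r] norm_ge_zero[of "x' 1 r"] by linarith
qed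

lemma m_int: "0 \<le> a \<Longrightarrow> m integrable_on {a..b}"
  by (rule integrable_continuous_interval, rule continuous_on_subset[OF m_cont]) auto

lemma M_diff: assumes "0 \<le> a" "a \<le> b" shows "integral {a..b} m = M b - M a"
proof -
  have "integral {0..a} m + integral {a..b} m = integral {0..b} m"
    by (rule Henstock_Kurzweil_Integration.integral_combine) (use assms m_int[of 0 b] in auto)
  then show ?thesis unfolding M_def by linarith
qed

lemma M_mono: assumes "0 \<le> a" "a \<le> b" shows "M a \<le> M b"
proof -
  have "0 \<le> integral {a..b} m" by (rule integral_nonneg_any) (simp add: m_nonneg)
  then show ?thesis using M_diff[OF assms] by simp
qed

lemma M_deriv: "t > 0 \<Longrightarrow> (M has_real_derivative m t) (at t)"
  unfolding M_def[abs_def] by (rule deriv_integral_at[OF m_cont])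

lemma M_cont: "continuous_on {0..T} M"
  unfolding M_def[abs_def] by (rule indefinite_integral_continuous_1, rule m_int) simp

lemma x_lip:
  assumes i: "i \<in> {1..N}" and ab: "0 \<le> a" "a \<le> b"
  shows "norm (x i b - x i a) \<le> M b - M a"
proof -
  have "(x' i has_integral (x i b - x i a)) {a..b}"
  proof (rule fundamental_theorem_of_calculus[OF ab(2)])
    fix s assume "s \<in> {a..b}"
    then have "(x i has_vector_derivative x' i s) (at s within {0..})" using x_deriv i ab by auto
    then show "(x i has_vector_derivative x' i s) (at s within {a..b})"
      by (rule has_vector_derivative_within_subset) (use ab in auto)
  qed
  then have eq: "integral {a..b} (x' i) = x i b - x i a" by (rule integral_unique)
  have int: "x' i integrable_on {a..b}" using \<open>(x' i has_integral _) _\<close> by (rule has_integral_integrable)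
  have "norm (integral {a..b} (x' i)) \<le> integral {a..b} m"
    by (rule integral_norm_bound_integral[OF int m_int[OF ab(1)]]) (rule m_ge[OF i])
  then show ?thesis using eq M_diff[OF ab] by (simp only:)
qed

end

lemma deriv_integral_at':
  fixes g :: "real \<Rightarrow> real"
  assumes "continuous_on {0..T} g" "t > 0" "t < T"
  shows "((\<lambda>u. integral {0..u} g) has_real_derivative g t) (at t)"
proof -
  have "((\<lambda>u. integral {0..u} g) has_real_derivative g t) (at t within {0..T})"
    by (rule integral_has_real_derivative) (use assms in auto)
  then have "((\<lambda>u. integral {0..u} g) has_real_derivative g t) (at t within {0<..<T})"
    by (rule DERIV_subset) auto
  moreover have "at t within {0<..<T} = at t" by (rule at_within_open) (use assms in auto)
  ultimately show ?thesis by simp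
qed

context cs begin

definition Pr where "Pr = {1..N} \<times> {1..N}"
definition fp where "fp p t = norm (x (fst p) t - x (snd p) t)"
definition G where "G t = integral {max 0 (t - 2*\<tau>)..t} (\<lambda>s. exp (-(t-s)) * integral {s..t} m)"
definition Pp where "Pp t = integral {0..t} (\<lambda>s. exp s * M s)"

lemma Pr_fin: "finite Pr" "Pr \<noteq> {}" using N2 by (auto simp: Pr_def)

lemma d_eq: "diam_x N x t = Max ((\<lambda>p. fp p t) ` Pr)"
  by (simp add: diam_x_def fp_def Pr_def case_prod_beta)

lemma F_eq: "F_fun \<beta> \<tau> N x x' t = diam_x N x t + \<beta> * G t"
  unfolding F_fun_def G_def m_def[abs_def] ..

lemma d_ge: "p \<in> Pr \<Longrightarrow> fp p t \<le> diam_x N x t"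
  unfolding d_eq using Pr_fin by (intro Max_ge) auto

lemma d_nonneg: "0 \<le> diam_x N x t"
proof -
  obtain p where "p \<in> Pr" using Pr_fin by blast
  then show ?thesis using d_ge[of p t] by (smt (verit) fp_def norm_ge_zero)
qed

lemma fp_cont: "p \<in> Pr \<Longrightarrow> continuous_on {-\<tau>..} (fp p)"
  unfolding fp_def[abs_def] Pr_def using x_cont
  by (intro continuous_on_norm continuous_on_diff) (auto simp: mem_Times_iff)

lemma d_cont: "continuous_on {-\<tau>..} (diam_x N x)"
proof -
  have "continuous_on {-\<tau>..} (\<lambda>t. Max ((\<lambda>p. fp p t) ` Pr))"
    using Pr_fin fp_cont by (intro continuous_on_Max_fam) auto
  then show ?thesis by (simp add: d_eq[abs_def])
qed

lemma G_nonneg: "0 \<le> G t"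
  unfolding G_def
  by (intro integral_nonneg_any mult_nonneg_nonneg) (auto intro!: integral_nonneg_any simp: m_nonneg)

lemma F_ge_d: "diam_x N x t \<le> F_fun \<beta> \<tau> N x x' t"
  using F_eq[of t] G_nonneg[of t] beta(1) by simp

lemma eM_cont: "continuous_on {0..T} (\<lambda>s. exp s * M s)"
  by (intro continuous_intros M_cont)

lemma Pp_cont: "continuous_on {0..T} Pp"
  unfolding Pp_def[abs_def] by (rule indefinite_integral_continuous_1, rule integrable_continuous_interval, rule eM_cont)

lemma Pp_diff: assumes "0 \<le> a" "a \<le> b" shows "integral {a..b} (\<lambda>s. exp s * M s) = Pp b - Pp a"
proof -
  have "integral {0..a} (\<lambda>s. exp s * M s) + integral {a..b} (\<lambda>s. exp s * M s) = integral {0..b} (\<lambda>s. exp s * M s)"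
    by (rule Henstock_Kurzweil_Integration.integral_combine) (use assms integrable_continuous_interval[OF eM_cont[of b]] in auto)
  then show ?thesis unfolding Pp_def by linarith
qed

lemma Pp_deriv: "t > 0 \<Longrightarrow> (Pp has_real_derivative exp t * M t) (at t)"
  unfolding Pp_def[abs_def] by (rule deriv_integral_at'[OF eM_cont[of "t+1"]]) auto

lemma M_deriv': "t > 0 \<Longrightarrow> (M has_real_derivative m t) (at t)"
  by (rule M_deriv)

lemma G_formula:
  assumes t: "0 \<le> t"
  shows "G t = exp (-t) * ((exp t - exp (max 0 (t - 2*\<tau>))) * M t) - exp (-t) * (Pp t - Pp (max 0 (t - 2*\<tau>)))"
proof -
  define a where "a = max 0 (t - 2*\<tau>)"
  have a: "0 \<le> a" "a \<le> t" using t tau_nonneg by (auto simp: a_def)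
  have "G t = integral {a..t} (\<lambda>s. exp (-t) * (exp s * M t) - exp (-t) * (exp s * M s))"
    unfolding G_def a_def[symmetric]
  proof (rule integral_cong)
    fix s assume s: "s \<in> {a..t}"
    have e1: "integral {s..t} m = M t - M s" using s a by (intro M_diff) auto
    have e2: "exp (-(t-s)) = exp (-t) * exp s" by (simp add: mult_exp_exp)
    have "exp (-(t-s)) * integral {s..t} m = (exp (-t) * exp s) * (M t - M s)" by (simp only: e1 e2)
    also have "\<dots> = exp (-t) * (exp s * M t) - exp (-t) * (exp s * M s)" by (simp add: algebra_simps)
    finally show "exp (-(t-s)) * integral {s..t} m = exp (-t) * (exp s * M t) - exp (-t) * (exp s * M s)" .
  qed
  also have "\<dots> = exp (-t) * integral {a..t} (\<lambda>s. exp s * M t) - exp (-t) * integral {a..t} (\<lambda>s. exp s * M s)"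
  proof -
    have i1: "(\<lambda>s. exp s * M t) integrable_on {a..t}" by (intro integrable_continuous_interval continuous_intros)
    have i2: "(\<lambda>s. exp s * M s) integrable_on {a..t}"
      by (rule integrable_continuous_interval, rule continuous_on_subset[OF eM_cont[of t]]) (use a in auto)
    show ?thesis using i1 i2 by (simp add: integral_diff integrable_on_cmult_left)
  qed
  also have "integral {a..t} (\<lambda>s. exp s * M t) = (exp t - exp a) * M t"
    using a by (simp add: integral_mult_left)
  also have "integral {a..t} (\<lambda>s. exp s * M s) = Pp t - Pp a" using a by (rule Pp_diff)
  finally show ?thesis unfolding a_def .
qed

end

context cs begin

lemma G_cont: "continuous_on {0..T} G"
proof -
  define a where "a = (\<lambda>t. max 0 (t - 2*\<tau>))"
  have ac: "continuous_on {0..T} a" unfolding a_def by (intro continuous_intros)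
  have aim: "a ` {0..T} \<subseteq> {0..T}" using tau_nonneg by (auto simp: a_def)
  have pa: "continuous_on {0..T} (\<lambda>t. Pp (a t))"
    by (rule continuous_on_compose2[OF Pp_cont ac aim])
  have c: "continuous_on {0..T} (\<lambda>t. exp (-t) * ((exp t - exp (a t)) * M t) - exp (-t) * (Pp t - Pp (a t)))"
    by (intro continuous_intros ac pa M_cont Pp_cont)
  have eqn: "\<And>t. t \<in> {0..T} \<Longrightarrow> G t = exp (-t) * ((exp t - exp (a t)) * M t) - exp (-t) * (Pp t - Pp (a t))"
    unfolding a_def by (rule G_formula) auto
  show ?thesis
  proof (rule continuous_on_eq[OF c])
    fix t assume "t \<in> {0..T}"
    then show "exp (-t) * ((exp t - exp (a t)) * M t) - exp (-t) * (Pp t - Pp (a t)) = G t"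
      using eqn by simp
  qed
qed

lemma F_cont: "continuous_on {0..T} (F_fun \<beta> \<tau> N x x')"
proof -
  have "continuous_on {0..T} (diam_x N x)"
    by (rule continuous_on_subset[OF d_cont]) (use tau_nonneg in auto)
  then have "continuous_on {0..T} (\<lambda>t. diam_x N x t + \<beta> * G t)"
    by (intro continuous_intros G_cont)
  then show ?thesis by (simp add: F_eq[abs_def])
qed

lemma G_deriv:
  assumes t: "t > 2*\<tau>"
  shows "(G has_real_derivative (- G t + m t * (1 - exp (-2*\<tau>)) - exp (-2*\<tau>) * (M t - M (t - 2*\<tau>)))) (at t)"
proof -
  define GG where "GG = (\<lambda>s. (1 - exp (-2*\<tau>)) * M s - exp (-s) * (Pp s - Pp (s - 2*\<tau>)))"
  have t0: "t > 0" "t - 2*\<tau> > 0" using t tau_nonneg by auto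
  have eq: "G s = GG s" if s: "s \<in> {2*\<tau><..}" for s
  proof -
    have m: "max 0 (s - 2*\<tau>) = s - 2*\<tau>" using s by auto
    have e1: "exp (-s) * exp s = 1" by (simp add: mult_exp_exp)
    have e2: "exp (-s) * exp (s - 2*\<tau>) = exp (-2*\<tau>)" by (simp add: mult_exp_exp)
    have "G s = exp (-s) * ((exp s - exp (s - 2*\<tau>)) * M s) - exp (-s) * (Pp s - Pp (s - 2*\<tau>))"
      using G_formula[of s] s tau_nonneg m by simp
    also have "exp (-s) * ((exp s - exp (s - 2*\<tau>)) * M s) = (exp (-s) * exp s - exp (-s) * exp (s - 2*\<tau>)) * M s"
      by (simp add: algebra_simps)
    finally show ?thesis unfolding GG_def e1 e2 .
  qed
  have d1: "(M has_real_derivative m t) (at t)" by (rule M_deriv[OF t0(1)])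
  have d2: "(Pp has_real_derivative exp t * M t) (at t)" using t0 by (intro Pp_deriv) auto
  have sh: "((\<lambda>s. s - 2*\<tau>) has_real_derivative 1) (at t)"
    by (auto intro!: derivative_eq_intros)
  have ng: "((\<lambda>s. -s) has_real_derivative -1) (at t)"
    by (auto intro!: derivative_eq_intros)
  have d3: "((\<lambda>s. Pp (s - 2*\<tau>)) has_real_derivative (exp (t - 2*\<tau>) * M (t - 2*\<tau>)) * 1) (at t)"
    using DERIV_chain2[of Pp "exp (t - 2*\<tau>) * M (t - 2*\<tau>)" "\<lambda>s. s - 2*\<tau>" t 1] Pp_deriv[OF t0(2)] sh by simp
  have d4: "((\<lambda>s. exp (-s)) has_real_derivative exp (-t) * (-1)) (at t)"
    using DERIV_chain2[of exp "exp (-t)" "\<lambda>s. -s" t "-1"] DERIV_exp[of "-t"] ng by simp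
  have dG: "(GG has_real_derivative ((1 - exp (-2*\<tau>)) * m t - (exp (-t) * (exp t * M t - exp (t - 2*\<tau>) * M (t - 2*\<tau>) * 1) + exp (-t) * (-1) * (Pp t - Pp (t - 2*\<tau>))))) (at t)"
    unfolding GG_def
    by (intro DERIV_diff DERIV_cmult d1 DERIV_mult'[OF d4 DERIV_diff[OF d2 d3]])
  have alg: "((1 - exp (-2*\<tau>)) * m t - (exp (-t) * (exp t * M t - exp (t - 2*\<tau>) * M (t - 2*\<tau>) * 1) + exp (-t) * (-1) * (Pp t - Pp (t - 2*\<tau>))))
     = - GG t + m t * (1 - exp (-2*\<tau>)) - exp (-2*\<tau>) * (M t - M (t - 2*\<tau>))"
  proof -
    have e1: "exp (-t) * exp t = 1" by (simp add: mult_exp_exp)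
    have e2: "exp (-t) * exp (t - 2*\<tau>) = exp (-2*\<tau>)" by (simp add: mult_exp_exp)
    have "exp (-t) * (exp t * M t - exp (t - 2*\<tau>) * M (t - 2*\<tau>) * 1) = (exp (-t) * exp t) * M t - (exp (-t) * exp (t - 2*\<tau>)) * M (t - 2*\<tau>)"
      by (simp add: algebra_simps)
    then show ?thesis unfolding GG_def e1 e2 by (simp add: algebra_simps)
  qed
  have "(GG has_real_derivative (- GG t + m t * (1 - exp (-2*\<tau>)) - exp (-2*\<tau>) * (M t - M (t - 2*\<tau>)))) (at t)"
    by (rule subst[where P="\<lambda>D. (GG has_real_derivative D) (at t)", OF alg dG])
  then have "(G has_real_derivative (- GG t + m t * (1 - exp (-2*\<tau>)) - exp (-2*\<tau>) * (M t - M (t - 2*\<tau>)))) (at t)"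
    by (rule has_field_derivative_transform_within_open[where S="{2*\<tau><..}"]) (use t eq in auto)
  then show ?thesis using eq[of t] t by simp
qed

end

lemma sum_weighted_le:
  fixes w c :: "'k \<Rightarrow> real"
  assumes "\<And>k. k \<in> A \<Longrightarrow> a \<le> w k" "\<And>k. k \<in> A \<Longrightarrow> c k \<le> 0"
  shows "(\<Sum>k\<in>A. w k * c k) \<le> a * (\<Sum>k\<in>A. c k)"
proof -
  have "(\<Sum>k\<in>A. w k * c k) \<le> (\<Sum>k\<in>A. a * c k)"
    using assms by (intro sum_mono) (simp add: mult_right_mono_neg)
  then show ?thesis by (simp add: sum_distrib_left)
qed

lemma sum_weighted_ge:
  fixes w c :: "'k \<Rightarrow> real"
  assumes "\<And>k. k \<in> A \<Longrightarrow> a \<le> w k" "\<And>k. k \<in> A \<Longrightarrow> 0 \<le> c k"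
  shows "a * (\<Sum>k\<in>A. c k) \<le> (\<Sum>k\<in>A. w k * c k)"
proof -
  have "(\<Sum>k\<in>A. a * c k) \<le> (\<Sum>k\<in>A. w k * c k)"
    using assms by (intro sum_mono) (simp add: mult_right_mono)
  then show ?thesis by (simp add: sum_distrib_left)
qed

context cs begin

abbreviation cw where "cw i j t \<equiv> comm_weight \<psi> N \<sigma> \<tau> x i j t"
abbreviation aw where "aw t \<equiv> min_weight \<psi> N \<sigma> \<tau> x t"

lemma N1: "real (N - 1) > 0" "real (N - 1) = real N - 1" using N2 by auto

lemma cw_pos: "0 < cw i j t"
  unfolding comm_weight_def using psi_pos N1 by simp

lemma cw_le: "cw i j t \<le> 1 / real (N - 1)"
  unfolding comm_weight_def using psi_le1 N1 by (simp add: divide_right_mono)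

lemma aw_le: "i \<in> {1..N} \<Longrightarrow> j \<in> {1..N} \<Longrightarrow> aw t \<le> cw i j t"
  unfolding min_weight_def by (rule Min_le) force+

lemma aw_pos: "0 < aw t"
proof -
  have "aw t \<in> (\<lambda>(i, j). cw i j t) ` ({1..N} \<times> {1..N})"
    unfolding min_weight_def using Nne by (intro Min_in) auto
  then show ?thesis using cw_pos by auto
qed

lemma aw_N: "real (N - 1) * aw t \<le> 1"
proof -
  have one: "(1::nat) \<in> {1..N}" using N2 by simp
  have h1: "aw t \<le> cw 1 1 t" using aw_le[OF one one] .
  have h2: "cw 1 1 t \<le> 1 / real (N - 1)" by (rule cw_le)
  have "aw t \<le> 1 / real (N - 1)" using h1 h2 by (rule order_trans)
  then show ?thesis using N1 by (simp add: field_simps)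
qed

lemma sum_cw: "i \<in> {1..N} \<Longrightarrow> (\<Sum>j\<in>{1..N} - {i}. cw i j t) \<le> 1"
proof -
  assume i: "i \<in> {1..N}"
  have "(\<Sum>j\<in>{1..N} - {i}. cw i j t) \<le> real (card ({1..N} - {i})) * (1 / real (N - 1))"
    by (rule sum_bounded_above) (rule cw_le)
  also have "card ({1..N} - {i}) = N - 1" using i by simp
  finally show ?thesis using N1 by simp
qed

lemma m_bound:
  assumes r: "r > \<tau>"
  shows "m r \<le> diam_x N x (r - \<tau>) + (M r - M (r - \<tau>))"
proof -
  define B where "B = diam_x N x (r - \<tau>) + (M r - M (r - \<tau>))"
  have r0: "r > 0" "r - \<tau> \<ge> 0" using r tau_nonneg by auto
  have "m r \<in> (\<lambda>i. norm (x' i r)) ` {1..N}" unfolding m_def using Nne by (intro Max_in) auto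
  then obtain i where i: "i \<in> {1..N}" "m r = norm (x' i r)" by auto
  have tb: "norm (x j (r - \<tau>) - x i (r - \<sigma>)) \<le> B" if j: "j \<in> {1..N}" for j
  proof -
    have "norm (x j (r - \<tau>) - x i (r - \<sigma>)) \<le> norm (x j (r - \<tau>) - x i (r - \<tau>)) + norm (x i (r - \<sigma>) - x i (r - \<tau>))"
      by (rule order_trans[OF _ norm_triangle_ineq4]) (simp add: algebra_simps norm_minus_commute)
    also have "norm (x j (r - \<tau>) - x i (r - \<tau>)) \<le> diam_x N x (r - \<tau>)"
      using d_ge[of "(j, i)" "r - \<tau>"] j i by (simp add: Pr_def fp_def)
    also have "norm (x i (r - \<sigma>) - x i (r - \<tau>)) \<le> M (r - \<sigma>) - M (r - \<tau>)"
      using x_lip[of i "r - \<tau>" "r - \<sigma>"] i r0 sig by simp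
    also have "M (r - \<sigma>) \<le> M r" using M_mono[of "r - \<sigma>" r] r0 sig by simp
    finally show ?thesis unfolding B_def by simp
  qed
  have "norm (x' i r) = norm (\<Sum>j\<in>{1..N} - {i}. cw i j r *\<^sub>R (x j (r - \<tau>) - x i (r - \<sigma>)))"
    using ode i r0 by simp
  also have "\<dots> \<le> (\<Sum>j\<in>{1..N} - {i}. norm (cw i j r *\<^sub>R (x j (r - \<tau>) - x i (r - \<sigma>))))"
    by (rule norm_sum)
  also have "\<dots> \<le> (\<Sum>j\<in>{1..N} - {i}. cw i j r * B)"
  proof (rule sum_mono)
    fix j assume "j \<in> {1..N} - {i}"
    then show "norm (cw i j r *\<^sub>R (x j (r - \<tau>) - x i (r - \<sigma>))) \<le> cw i j r * B"
      using tb[of j] cw_pos[of i j r] by (simp add: mult_left_mono)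
  qed
  also have "\<dots> = (\<Sum>j\<in>{1..N} - {i}. cw i j r) * B" by (simp add: sum_distrib_right)
  also have "\<dots> \<le> 1 * B"
  proof (rule mult_right_mono)
    show "(\<Sum>j\<in>{1..N} - {i}. cw i j r) \<le> 1" using i(1) by (rule sum_cw)
    show "0 \<le> B" unfolding B_def using d_nonneg M_mono[of "r - \<tau>" r] r0 tau_nonneg by simp
  qed
  finally show ?thesis using i by (simp add: B_def)
qed

end

context cs begin

definition hp where "hp p t = x (fst p) t - x (snd p) t"
definition hd where "hd p t = x' (fst p) t - x' (snd p) t"
definition fd where "fd p t = (if hp p t = 0 then 0 else inner (hp p t) (hd p t) / norm (hp p t))"
definition E1 where "E1 = (\<Union>p\<in>Pr. {t. hp p t = 0 \<and> (\<exists>v. v \<noteq> 0 \<and> (hp p has_vector_derivative v) (at t))})"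
definition E2 where "E2 = (\<Union>p\<in>Pr. \<Union>q\<in>Pr. {t. (\<lambda>s. fp p s - fp q s) t = 0 \<and>
    (\<exists>v. v \<noteq> 0 \<and> ((\<lambda>s. fp p s - fp q s) has_vector_derivative v) (at t))})"

lemma E_countable: "countable (E1 \<union> E2)"
  unfolding E1_def E2_def using Pr_fin
  by (intro countable_Un countable_UN countable_finite countable_zero_nonzero_deriv)

lemma fp_hp: "fp p t = norm (hp p t)" by (simp add: fp_def hp_def)

lemma x_der_at: assumes "i \<in> {1..N}" "t > 0" shows "(x i has_vector_derivative x' i t) (at t)"
proof -
  have "(x i has_vector_derivative x' i t) (at t within {0..})" using x_deriv assms by auto
  then have "(x i has_vector_derivative x' i t) (at t within {0<..})"
    by (rule has_vector_derivative_within_subset) auto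
  then show ?thesis using assms(2) by (subst (asm) has_vector_derivative_within_open) auto
qed

lemma hp_der: assumes "p \<in> Pr" "t > 0" shows "(hp p has_vector_derivative hd p t) (at t)"
proof -
  have "fst p \<in> {1..N}" "snd p \<in> {1..N}" using assms(1) by (auto simp: Pr_def mem_Times_iff)
  then show ?thesis unfolding hp_def[abs_def] hd_def
    by (intro has_vector_derivative_diff x_der_at assms(2))
qed

lemma fp_der: assumes p: "p \<in> Pr" and t: "t > 0" "t \<notin> E1"
  shows "(fp p has_real_derivative fd p t) (at t)"
proof (cases "hp p t = 0")
  case False
  have h1: "(hp p has_derivative (\<lambda>h. h *\<^sub>R hd p t)) (at t)"
    using hp_der[OF p t(1)] by (simp add: has_vector_derivative_def)
  have h2: "((\<lambda>v. norm v) has_derivative (\<lambda>h. inner h (sgn (hp p t)))) (at (hp p t))"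
    by (rule has_derivative_norm[OF False])
  have "((\<lambda>v. norm v) \<circ> hp p has_derivative ((\<lambda>h. inner h (sgn (hp p t))) \<circ> (\<lambda>h. h *\<^sub>R hd p t))) (at t)"
    by (rule diff_chain_at[OF h1 h2])
  moreover have "(\<lambda>v. norm v) \<circ> hp p = fp p" by (auto simp: fp_hp)
  moreover have "((\<lambda>h. inner h (sgn (hp p t))) \<circ> (\<lambda>h. h *\<^sub>R hd p t)) = (*) (fd p t)"
  proof
    fix h
    have "inner (h *\<^sub>R hd p t) (sgn (hp p t)) = h * (inner (hp p t) (hd p t) / norm (hp p t))"
      by (simp add: sgn_div_norm inner_commute divide_inverse)
    then show "((\<lambda>h. inner h (sgn (hp p t))) \<circ> (\<lambda>h. h *\<^sub>R hd p t)) h = fd p t * h"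
      using False by (simp add: fd_def)
  qed
  ultimately show ?thesis by (simp add: has_field_derivative_def)
next
  case True
  have hd0: "hd p t = 0"
  proof (rule ccontr)
    assume "hd p t \<noteq> 0"
    then have "t \<in> E1" unfolding E1_def using p True hp_der[OF p t(1)] by blast
    then show False using t(2) by simp
  qed
  have "\<forall>e>0. \<exists>d>0. \<forall>y. norm (y - t) < d \<longrightarrow> norm (hp p y - hp p t - (y - t) *\<^sub>R hd p t) \<le> e * norm (y - t)"
    using hp_der[OF p t(1)] unfolding has_vector_derivative_def has_derivative_at_alt by blast
  then have "\<forall>e>0. \<exists>d>0. \<forall>y. norm (y - t) < d \<longrightarrow> norm (fp p y - fp p t - fd p t * (y - t)) \<le> e * norm (y - t)"
    using True hd0 by (simp add: fp_hp fd_def)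
  moreover have "bounded_linear ((*) (fd p t))" by (rule bounded_linear_mult_right)
  ultimately show ?thesis unfolding has_field_derivative_def has_derivative_at_alt by blast
qed

lemma d_der: assumes t: "t > 0" "t \<notin> E1 \<union> E2"
  shows "\<exists>p0\<in>Pr. fp p0 t = diam_x N x t \<and> (diam_x N x has_real_derivative fd p0 t) (at t)"
proof -
  have "diam_x N x t \<in> (\<lambda>p. fp p t) ` Pr" unfolding d_eq using Pr_fin by (intro Max_in) auto
  then obtain p0 where p0: "p0 \<in> Pr" "fp p0 t = diam_x N x t" by auto
  have tE1: "t \<notin> E1" using t by auto
  have "((\<lambda>s. Max ((\<lambda>p. fp p s) ` Pr)) has_real_derivative fd p0 t) (at t)"
  proof (rule has_derivative_Max_fam[OF Pr_fin(1) p0(1)])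
    fix k assume kP: "k \<in> Pr"
    show "isCont (fp k) t" by (rule DERIV_isCont[OF fp_der[OF kP t(1) tE1]])
  next
    show "fp p0 t = Max ((\<lambda>k. fp k t) ` Pr)" using p0 d_eq by simp
  next
    fix k assume k: "k \<in> Pr" "fp k t = Max ((\<lambda>k. fp k t) ` Pr)"
    have "fd k t = fd p0 t"
    proof (rule ccontr)
      assume ne: "fd k t \<noteq> fd p0 t"
      have "((\<lambda>s. fp k s - fp p0 s) has_real_derivative fd k t - fd p0 t) (at t)"
        by (intro DERIV_diff fp_der[OF _ t(1) tE1] k(1) p0(1))
      then have "((\<lambda>s. fp k s - fp p0 s) has_vector_derivative fd k t - fd p0 t) (at t)"
        by (simp add: has_real_derivative_iff_has_vector_derivative)
      moreover have "(\<lambda>s. fp k s - fp p0 s) t = 0" using k p0 d_eq by simp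
      ultimately have "t \<in> {t. (\<lambda>s. fp k s - fp p0 s) t = 0 \<and>
          (\<exists>v. v \<noteq> 0 \<and> ((\<lambda>s. fp k s - fp p0 s) has_vector_derivative v) (at t))}"
        using ne by (intro CollectI conjI exI[of _ "fd k t - fd p0 t"]) auto
      then have "t \<in> E2" unfolding E2_def using k(1) p0(1) by blast
      then show False using t(2) by simp
    qed
    then show "(fp k has_real_derivative fd p0 t) (at t)" using fp_der[OF k(1) t(1) tE1] by simp
  qed
  moreover have "diam_x N x = (\<lambda>s. Max ((\<lambda>p. fp p s) ` Pr))" by (rule ext) (rule d_eq)
  ultimately show ?thesis using p0 by metis
qed

end

context cs begin

lemma one_sided:
  assumes l: "l \<in> {1..N}" and t: "t > 0" "\<tau> \<le> t"
  shows "\<bar>inner u (x' l t) - (\<Sum>k\<in>{1..N} - {l}. cw l k t * inner u (x k t - x l t))\<bar> \<le> norm u * (2 * (M t - M (t - \<tau>)))"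
proof -
  define DM where "DM = M t - M (t - \<tau>)"
  have err: "norm ((x k (t - \<tau>) - x l (t - \<sigma>)) - (x k t - x l t)) \<le> 2 * DM" if k: "k \<in> {1..N}" for k
  proof -
    have "(x k (t - \<tau>) - x l (t - \<sigma>)) - (x k t - x l t) = (x l t - x l (t - \<sigma>)) - (x k t - x k (t - \<tau>))"
      by (simp add: algebra_simps)
    then have "norm ((x k (t - \<tau>) - x l (t - \<sigma>)) - (x k t - x l t)) \<le> norm (x l t - x l (t - \<sigma>)) + norm (x k t - x k (t - \<tau>))"
      by (simp only: norm_triangle_ineq4)
    also have "norm (x k t - x k (t - \<tau>)) \<le> DM" unfolding DM_def using x_lip[OF k, of "t - \<tau>" t] t tau_nonneg by simp
    also have "norm (x l t - x l (t - \<sigma>)) \<le> M t - M (t - \<sigma>)" using x_lip[OF l, of "t - \<sigma>" t] t sig by simp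
    also have "M t - M (t - \<sigma>) \<le> DM" unfolding DM_def using M_mono[of "t - \<tau>" "t - \<sigma>"] t sig by simp
    finally show ?thesis by simp
  qed
  have xo: "x' l t = (\<Sum>k\<in>{1..N} - {l}. cw l k t *\<^sub>R (x k (t - \<tau>) - x l (t - \<sigma>)))"
    by (rule ode[rule_format, OF l t(1)])
  have "inner u (x' l t) = (\<Sum>k\<in>{1..N} - {l}. cw l k t * inner u (x k (t - \<tau>) - x l (t - \<sigma>)))"
    unfolding xo by (simp only: inner_sum_right inner_scaleR_right)
  then have "inner u (x' l t) - (\<Sum>k\<in>{1..N} - {l}. cw l k t * inner u (x k t - x l t))
      = (\<Sum>k\<in>{1..N} - {l}. cw l k t * inner u (x k (t - \<tau>) - x l (t - \<sigma>)) - cw l k t * inner u (x k t - x l t))"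
    by (simp only: sum_subtractf)
  also have "\<dots> = (\<Sum>k\<in>{1..N} - {l}. cw l k t * inner u ((x k (t - \<tau>) - x l (t - \<sigma>)) - (x k t - x l t)))"
    by (rule sum.cong) (simp_all only: inner_diff_right right_diff_distrib)
  finally have eqS: "inner u (x' l t) - (\<Sum>k\<in>{1..N} - {l}. cw l k t * inner u (x k t - x l t))
      = (\<Sum>k\<in>{1..N} - {l}. cw l k t * inner u ((x k (t - \<tau>) - x l (t - \<sigma>)) - (x k t - x l t)))" .
  have "\<bar>(\<Sum>k\<in>{1..N} - {l}. cw l k t * inner u ((x k (t - \<tau>) - x l (t - \<sigma>)) - (x k t - x l t)))\<bar> \<le> (\<Sum>k\<in>{1..N} - {l}. \<bar>cw l k t * inner u ((x k (t - \<tau>) - x l (t - \<sigma>)) - (x k t - x l t))\<bar>)"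
    by (rule sum_abs)
  also have "\<dots> \<le> (\<Sum>k\<in>{1..N} - {l}. cw l k t * (norm u * (2 * DM)))"
  proof (rule sum_mono)
    fix k assume k: "k \<in> {1..N} - {l}"
    have "\<bar>inner u ((x k (t - \<tau>) - x l (t - \<sigma>)) - (x k t - x l t))\<bar> \<le> norm u * norm ((x k (t - \<tau>) - x l (t - \<sigma>)) - (x k t - x l t))"
      by (rule Cauchy_Schwarz_ineq2)
    also have "\<dots> \<le> norm u * (2 * DM)" using err[of k] k by (intro mult_left_mono) simp_all
    finally show "\<bar>cw l k t * inner u ((x k (t - \<tau>) - x l (t - \<sigma>)) - (x k t - x l t))\<bar> \<le> cw l k t * (norm u * (2 * DM))"
      using cw_pos[of l k t] by (simp only: abs_mult abs_of_pos mult_left_mono)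
  qed
  also have "\<dots> = (\<Sum>k\<in>{1..N} - {l}. cw l k t) * (norm u * (2 * DM))" by (simp add: sum_distrib_right)
  also have "\<dots> \<le> 1 * (norm u * (2 * DM))"
  proof (rule mult_right_mono)
    show "(\<Sum>k\<in>{1..N} - {l}. cw l k t) \<le> 1" using l by (rule sum_cw)
    have "0 \<le> DM" unfolding DM_def using M_mono[of "t - \<tau>" t] t tau_nonneg by simp
    then show "0 \<le> norm u * (2 * DM)" by simp
  qed
  finally show ?thesis unfolding eqS DM_def by simp
qed

lemma diam_bound:
  assumes p0: "p0 \<in> Pr" "fp p0 t = diam_x N x t" and t: "t > 0" "\<tau> \<le> t"
  shows "fd p0 t \<le> - (real (N - 1) * aw t) * diam_x N x t + 4 * (M t - M (t - \<tau>))"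
proof -
  define DM where "DM = M t - M (t - \<tau>)"
  have DM0: "0 \<le> DM" unfolding DM_def using M_mono[of "t - \<tau>" t] t tau_nonneg by simp
  show ?thesis
  proof (cases "hp p0 t = 0")
    case True
    then have "fd p0 t = 0" "diam_x N x t = 0" using p0(2) by (auto simp: fd_def fp_hp)
    then show ?thesis using DM0 by (simp add: DM_def)
  next
    case False
    define i where "i = fst p0"
    define j where "j = snd p0"
    define u where "u = hp p0 t"
    define D where "D = norm u"
    have ij: "i \<in> {1..N}" "j \<in> {1..N}" using p0(1) by (auto simp: Pr_def mem_Times_iff i_def j_def)
    have u: "u = x i t - x j t" by (simp add: u_def hp_def i_def j_def)
    have Dd: "D = diam_x N x t" using p0(2) by (simp add: D_def u_def fp_hp)
    have Dpos: "D > 0" using False by (simp add: D_def u_def)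
    have uu: "inner u u = D * D" by (simp add: D_def power2_eq_square[symmetric] power2_norm_eq_inner)
    have nkj: "norm (x k t - x j t) \<le> D" if "k \<in> {1..N}" for k
      using d_ge[of "(k, j)" t] that ij Dd by (simp add: Pr_def fp_def)
    have nik: "norm (x i t - x k t) \<le> D" if "k \<in> {1..N}" for k
      using d_ge[of "(i, k)" t] that ij Dd by (simp add: Pr_def fp_def)
    have c_le: "inner u (x k t - x i t) \<le> 0" if k: "k \<in> {1..N}" for k
    proof -
      have "inner u (x k t - x j t) = inner u (x k t - x i t) + inner u u"
        unfolding u by (simp add: inner_diff_right)
      moreover have "inner u (x k t - x j t) \<le> D * D"
        using norm_cauchy_schwarz[of u "x k t - x j t"] nkj[OF k] Dpos
        by (smt (verit, best) D_def mult_left_mono norm_ge_zero)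
      ultimately show ?thesis using uu by simp
    qed
    have c_ge: "0 \<le> inner u (x k t - x j t)" if k: "k \<in> {1..N}" for k
    proof -
      have "inner u (x i t - x k t) = inner u u - inner u (x k t - x j t)"
        unfolding u by (simp add: inner_diff_right)
      moreover have "inner u (x i t - x k t) \<le> D * D"
        using norm_cauchy_schwarz[of u "x i t - x k t"] nik[OF k] Dpos
        by (smt (verit, best) D_def mult_left_mono norm_ge_zero)
      ultimately show ?thesis using uu by simp
    qed
    have fin: "finite {1..N}" by simp
    have A: "inner u (x' i t) \<le> aw t * (\<Sum>k\<in>{1..N}. inner u (x k t - x i t)) + D * (2 * DM)"
    proof -
      have "inner u (x' i t) \<le> (\<Sum>k\<in>{1..N} - {i}. cw i k t * inner u (x k t - x i t)) + D * (2 * DM)"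
        using one_sided[OF ij(1) t, of u] unfolding D_def DM_def by linarith
      moreover have "(\<Sum>k\<in>{1..N} - {i}. cw i k t * inner u (x k t - x i t)) \<le> aw t * (\<Sum>k\<in>{1..N} - {i}. inner u (x k t - x i t))"
        by (rule sum_weighted_le) (use aw_le ij c_le in auto)
      moreover have "(\<Sum>k\<in>{1..N} - {i}. inner u (x k t - x i t)) = (\<Sum>k\<in>{1..N}. inner u (x k t - x i t))"
        using sum.remove[OF fin ij(1), of "\<lambda>k. inner u (x k t - x i t)"] by simp
      ultimately show ?thesis by simp
    qed
    have B: "aw t * (\<Sum>k\<in>{1..N}. inner u (x k t - x j t)) - D * (2 * DM) \<le> inner u (x' j t)"
    proof -
      have "(\<Sum>k\<in>{1..N} - {j}. cw j k t * inner u (x k t - x j t)) - D * (2 * DM) \<le> inner u (x' j t)"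
        using one_sided[OF ij(2) t, of u] unfolding D_def DM_def by linarith
      moreover have "aw t * (\<Sum>k\<in>{1..N} - {j}. inner u (x k t - x j t)) \<le> (\<Sum>k\<in>{1..N} - {j}. cw j k t * inner u (x k t - x j t))"
        by (rule sum_weighted_ge) (use aw_le ij c_ge in auto)
      moreover have "(\<Sum>k\<in>{1..N} - {j}. inner u (x k t - x j t)) = (\<Sum>k\<in>{1..N}. inner u (x k t - x j t))"
        using sum.remove[OF fin ij(2), of "\<lambda>k. inner u (x k t - x j t)"] by simp
      ultimately show ?thesis by simp
    qed
    have sumdiff: "(\<Sum>k\<in>{1..N}. inner u (x k t - x i t)) - (\<Sum>k\<in>{1..N}. inner u (x k t - x j t)) = - (real N * (D * D))"
    proof -
      have "(\<Sum>k\<in>{1..N}. inner u (x k t - x i t)) - (\<Sum>k\<in>{1..N}. inner u (x k t - x j t))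
          = (\<Sum>k\<in>{1..N}. inner u (x k t - x i t) - inner u (x k t - x j t))"
        by (simp only: sum_subtractf)
      also have "\<dots> = (\<Sum>k\<in>{1..N}. - (D * D))"
      proof (rule sum.cong)
        fix k
        have "inner u (x k t - x i t) - inner u (x k t - x j t) = - inner u u"
          unfolding u by (simp add: inner_diff_right)
        then show "inner u (x k t - x i t) - inner u (x k t - x j t) = - (D * D)" using uu by simp
      qed simp
      finally show ?thesis by simp
    qed
    have hdv: "hd p0 t = x' i t - x' j t" by (simp add: hd_def i_def j_def)
    have S: "inner u (hd p0 t) \<le> - (aw t * real N * (D * D)) + 4 * D * DM"
    proof -
      have "inner u (hd p0 t) = inner u (x' i t) - inner u (x' j t)" by (simp add: hdv inner_diff_right)
      also have "\<dots> \<le> aw t * ((\<Sum>k\<in>{1..N}. inner u (x k t - x i t)) - (\<Sum>k\<in>{1..N}. inner u (x k t - x j t))) + 4 * D * DM"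
        using A B by (simp add: algebra_simps)
      also have "\<dots> = - (aw t * real N * (D * D)) + 4 * D * DM" by (subst sumdiff) (simp add: algebra_simps)
      finally show ?thesis .
    qed
    have fdv: "fd p0 t = inner u (hd p0 t) / D" using False by (simp add: fd_def D_def u_def)
    have "fd p0 t \<le> - (aw t * real N * D) + 4 * DM"
    proof -
      have "inner u (hd p0 t) \<le> (- (aw t * real N * D) + 4 * DM) * D" using S by (simp add: algebra_simps)
      then show ?thesis unfolding fdv using Dpos by (simp add: pos_divide_le_eq)
    qed
    moreover have "real (N - 1) * aw t * D \<le> aw t * real N * D"
      using aw_pos[of t] Dpos N1 by (simp add: algebra_simps)
    ultimately show ?thesis using Dd by (simp add: DM_def)
  qed
qed

end

context cs begin

lemma I_bound:
  assumes t: "t > 2*\<tau>"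
  shows "M t - M (t - \<tau>) \<le> integral {t - \<tau>..t} (\<lambda>s. F_fun \<beta> \<tau> N x x' (s - \<tau>)) + \<tau> * (M t - M (t - 2*\<tau>))"
proof -
  define C where "C = M t - M (t - 2*\<tau>)"
  have t0: "0 \<le> t - 2*\<tau>" "t - \<tau> \<le> t" "0 \<le> t - \<tau>" using t tau_nonneg by auto
  have eq: "integral {t - \<tau>..t} m = M t - M (t - \<tau>)" using t0 by (intro M_diff) auto
  have cF: "continuous_on {t - \<tau>..t} (\<lambda>s. F_fun \<beta> \<tau> N x x' (s - \<tau>))"
  proof (rule continuous_on_compose2[OF F_cont[of t]])
    show "continuous_on {t - \<tau>..t} (\<lambda>s. s - \<tau>)" by (intro continuous_intros)
    show "(\<lambda>s. s - \<tau>) ` {t - \<tau>..t} \<subseteq> {0..t}" using t tau_nonneg by auto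
  qed
  have iF: "(\<lambda>s. F_fun \<beta> \<tau> N x x' (s - \<tau>)) integrable_on {t - \<tau>..t}"
    by (rule integrable_continuous_interval[OF cF])
  have iFC: "(\<lambda>s. F_fun \<beta> \<tau> N x x' (s - \<tau>) + C) integrable_on {t - \<tau>..t}"
    by (intro integrable_add iF integrable_const_ivl)
  have "integral {t - \<tau>..t} m \<le> integral {t - \<tau>..t} (\<lambda>s. F_fun \<beta> \<tau> N x x' (s - \<tau>) + C)"
  proof (rule integral_le[OF m_int[OF t0(3)] iFC])
    fix s assume s: "s \<in> {t - \<tau>..t}"
    have s1: "s > \<tau>" using s t by auto
    have "m s \<le> diam_x N x (s - \<tau>) + (M s - M (s - \<tau>))" by (rule m_bound[OF s1])
    moreover have "diam_x N x (s - \<tau>) \<le> F_fun \<beta> \<tau> N x x' (s - \<tau>)" by (rule F_ge_d)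
    moreover have "M s \<le> M t" using M_mono[of s t] s s1 tau_nonneg by simp
    moreover have "M (t - 2*\<tau>) \<le> M (s - \<tau>)" using M_mono[of "t - 2*\<tau>" "s - \<tau>"] s t0 by simp
    ultimately show "m s \<le> F_fun \<beta> \<tau> N x x' (s - \<tau>) + C" unfolding C_def by linarith
  qed
  also have "\<dots> = integral {t - \<tau>..t} (\<lambda>s. F_fun \<beta> \<tau> N x x' (s - \<tau>)) + \<tau> * C"
  proof -
    have "integral {t - \<tau>..t} (\<lambda>s. F_fun \<beta> \<tau> N x x' (s - \<tau>) + C)
        = integral {t - \<tau>..t} (\<lambda>s. F_fun \<beta> \<tau> N x x' (s - \<tau>)) + integral {t - \<tau>..t} (\<lambda>s. C)"
      by (rule integral_add[OF iF integrable_const_ivl])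
    moreover have "integral {t - \<tau>..t} (\<lambda>s. C) = \<tau> * C" using t0 by simp
    ultimately show ?thesis by simp
  qed
  finally show ?thesis using eq by (simp add: C_def)
qed

lemma main:
  "AE t in lborel. t > 2 * \<tau> \<longrightarrow>
           (\<exists>D. (F_fun \<beta> \<tau> N x x' has_real_derivative D) (at t) \<and>
                D \<le> 4 * integral {t - \<tau>..t} (\<lambda>s. F_fun \<beta> \<tau> N x x' (s - \<tau>))
                     - real (N - 1) * min_weight \<psi> N \<sigma> \<tau> x t * F_fun \<beta> \<tau> N x x' t
                     + \<beta> * (1 - exp (- 2 * \<tau>)) * F_fun \<beta> \<tau> N x x' (t - \<tau>))"
proof (rule AE_I'[OF countable_imp_null_set_lborel[OF E_countable]], rule subsetI, rule ccontr)
  fix t assume tin: "t \<in> {t \<in> space lborel. \<not> (t > 2 * \<tau> \<longrightarrow>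
           (\<exists>D. (F_fun \<beta> \<tau> N x x' has_real_derivative D) (at t) \<and>
                D \<le> 4 * integral {t - \<tau>..t} (\<lambda>s. F_fun \<beta> \<tau> N x x' (s - \<tau>))
                     - real (N - 1) * min_weight \<psi> N \<sigma> \<tau> x t * F_fun \<beta> \<tau> N x x' t
                     + \<beta> * (1 - exp (- 2 * \<tau>)) * F_fun \<beta> \<tau> N x x' (t - \<tau>)))}"
    and tE: "t \<notin> E1 \<union> E2"
  have t: "t > 2*\<tau>" using tin by simp
  have t0: "t > 0" "\<tau> \<le> t" "t > \<tau>" using t tau_nonneg by auto
  obtain p0 where p0: "p0 \<in> Pr" "fp p0 t = diam_x N x t" and dd: "(diam_x N x has_real_derivative fd p0 t) (at t)"
    using d_der[OF t0(1) tE] by blast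
  define DG where "DG = - G t + m t * (1 - exp (-2*\<tau>)) - exp (-2*\<tau>) * (M t - M (t - 2*\<tau>))"
  have dg: "(G has_real_derivative DG) (at t)" unfolding DG_def by (rule G_deriv[OF t])
  have Fe: "F_fun \<beta> \<tau> N x x' = (\<lambda>s. diam_x N x s + \<beta> * G s)" by (rule ext) (rule F_eq)
  have dF: "(F_fun \<beta> \<tau> N x x' has_real_derivative fd p0 t + \<beta> * DG) (at t)"
    unfolding Fe by (intro DERIV_add DERIV_cmult dd dg)
  define a where "a = min_weight \<psi> N \<sigma> \<tau> x t"
  define d where "d = diam_x N x t"
  define Gt where "Gt = G t"
  define e where "e = exp (- 2 * \<tau>)"
  define dM1 where "dM1 = M t - M (t - \<tau>)"
  define dM2 where "dM2 = M t - M (t - 2*\<tau>)"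
  define I where "I = integral {t - \<tau>..t} (\<lambda>s. F_fun \<beta> \<tau> N x x' (s - \<tau>))"
  define F1 where "F1 = F_fun \<beta> \<tau> N x x' (t - \<tau>)"
  define mt where "mt = m t"
  define fv where "fv = fd p0 t"
  define n1 where "n1 = real (N - 1)"
  have DGv: "DG = - Gt + mt * (1 - e) - e * dM2" unfolding DG_def Gt_def mt_def e_def dM2_def by simp
  have Ft: "F_fun \<beta> \<tau> N x x' t = d + \<beta> * Gt" unfolding d_def Gt_def by (rule F_eq)
  have f1: "fv \<le> - (n1 * a) * d + 4 * dM1"
    unfolding fv_def n1_def a_def d_def dM1_def by (rule diam_bound[OF p0 t0(1,2)])
  have f2: "mt \<le> F1 + dM1"
    using m_bound[OF t0(3)] F_ge_d[of "t - \<tau>"] unfolding mt_def F1_def dM1_def by linarith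
  have f3: "dM1 \<le> I + \<tau> * dM2" unfolding dM1_def I_def dM2_def by (rule I_bound[OF t])
  have f4: "0 \<le> dM1" "dM1 \<le> dM2"
    using M_mono[of "t - \<tau>" t] M_mono[of "t - 2*\<tau>" "t - \<tau>"] t0 tau_nonneg t
    unfolding dM1_def dM2_def by auto
  have f5: "0 \<le> n1 * a" "n1 * a \<le> 1" using aw_pos[of t] aw_N[of t] N1
    unfolding n1_def a_def by auto
  have f6: "0 \<le> Gt" unfolding Gt_def by (rule G_nonneg)
  have f7: "0 < e" "e \<le> 1" unfolding e_def using tau_nonneg by auto
  have f8: "2 * \<beta> * e - 4 * \<tau> - \<beta> \<ge> 0" "\<beta> > 0" unfolding e_def using beta by auto
  have P1: "\<beta> * (1 - e) * mt \<le> \<beta> * (1 - e) * (F1 + dM1)"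
    using f2 f7 f8 by (intro mult_left_mono) auto
  have P2: "(n1 * a) * (\<beta> * Gt) \<le> 1 * (\<beta> * Gt)"
    using f5 f6 f8 by (intro mult_right_mono) auto
  have P3: "\<beta> * (1 - e) * dM1 \<le> \<beta> * (1 - e) * dM2"
    using f4 f7 f8 by (intro mult_left_mono) auto
  have P4: "dM2 * (4 * \<tau> + \<beta> - 2 * \<beta> * e) \<le> 0"
    using f4 f8 by (intro mult_nonneg_nonpos) auto
  have "fv + \<beta> * DG \<le> 4 * I - n1 * a * (d + \<beta> * Gt) + \<beta> * (1 - e) * F1"
    using f1 f3 P1 P2 P3 P4 unfolding DGv by (simp add: algebra_simps)
  then have "fd p0 t + \<beta> * DG \<le> 4 * integral {t - \<tau>..t} (\<lambda>s. F_fun \<beta> \<tau> N x x' (s - \<tau>))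
                     - real (N - 1) * min_weight \<psi> N \<sigma> \<tau> x t * F_fun \<beta> \<tau> N x x' t
                     + \<beta> * (1 - exp (- 2 * \<tau>)) * F_fun \<beta> \<tau> N x x' (t - \<tau>)"
    unfolding Ft fv_def I_def n1_def a_def e_def F1_def by simp
  then show False using tin dF by blast
qed

end

theorem lemma3p4:
  fixes N :: nat and \<sigma> \<tau> \<beta> :: real and \<psi> :: "real \<Rightarrow> real"
    and x x' :: "nat \<Rightarrow> real \<Rightarrow> 'a::euclidean_space"
  assumes N2: "N \<ge> 2"
    and sig: "0 \<le> \<sigma>" "\<sigma> \<le> \<tau>"
    and psi_cont: "continuous_on {0..} \<psi>"
    and psi_mono: "\<forall>s t. 0 \<le> s \<and> s \<le> t \<longrightarrow> \<psi> t \<le> \<psi> s"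
    and psi_pos: "\<forall>r\<ge>0. 0 < \<psi> r"
    and psi_le1: "\<forall>r\<ge>0. \<psi> r \<le> 1"
    and x_cont: "\<forall>i\<in>{1..N}. continuous_on {-\<tau>..} (x i)"
    and x_deriv: "\<forall>i\<in>{1..N}. \<forall>t\<ge>0. (x i has_vector_derivative x' i t) (at t within {0..})"
    and x'_cont: "\<forall>i\<in>{1..N}. continuous_on {0..} (x' i)"
    and ode: "\<forall>i\<in>{1..N}. \<forall>t>0.
               x' i t = (\<Sum>j\<in>{1..N} - {i}. comm_weight \<psi> N \<sigma> \<tau> x i j t *\<^sub>R (x j (t - \<tau>) - x i (t - \<sigma>)))"
    and beta: "\<beta> > 0" "2 * \<beta> * exp (- 2 * \<tau>) - 4 * \<tau> - \<beta> \<ge> 0"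
  shows "AE t in lborel. t > 2 * \<tau> \<longrightarrow>
           (\<exists>D. (F_fun \<beta> \<tau> N x x' has_real_derivative D) (at t) \<and>
                D \<le> 4 * integral {t - \<tau>..t} (\<lambda>s. F_fun \<beta> \<tau> N x x' (s - \<tau>))
                     - real (N - 1) * min_weight \<psi> N \<sigma> \<tau> x t * F_fun \<beta> \<tau> N x x' t
                     + \<beta> * (1 - exp (- 2 * \<tau>)) * F_fun \<beta> \<tau> N x x' (t - \<tau>))"
  proof -
  have "cs N \<sigma> \<tau> \<beta> \<psi> x x'"
    unfolding cs_def by (intro conjI assms)
  then show ?thesis by (rule cs.main)
qed

end
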